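(* Let $n\ge1$ and $s\in D^n$. Then $\sum_{i=1}^{n}L_i\le\sum_{i=1}^{n}\left\lfloor\frac{i+1}{2}\right\rfloor$.
   Context: Let $D$ be a commutative integral domain with $1\neq 0$. For $s=(s_1,\dots,s_n)\in D^n$, a polynomial $f\in D[x]$ annihilates $s$ if $f=0$, or $d=\deg f\ge0$ and $\sum_{k=0}^{d}f_ks_{j-d+k}=0$ for all $d+1\le j\le n$. The linear complexity $L(s)$ is the least degree of a nonzero annihilator of $s$, and $L_i=L(s_1,\dots,s_i)$. *)

theory Defs
  imports "HOL-Computational_Algebra.Polynomial"
begin

text \<open>A sequence s = (s_1,...,s_n) in D^n is a list of length n; s_j is s ! (j-1).
  f annihilates s iff f = 0, or with d = degree f,
  sum_{k=0}^d f_k s_{j-d+k} = 0 for all d+1 <= j <= n.\<close>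

definition annihilates :: "'a::idom poly \<Rightarrow> 'a list \<Rightarrow> bool" where
  "annihilates f s \<longleftrightarrow> f = 0 \<or>
     (\<forall>j. degree f + 1 \<le> j \<and> j \<le> length s \<longrightarrow>
        (\<Sum>k\<le>degree f. coeff f k * s ! (j - degree f + k - 1)) = 0)"

definition lin_compl :: "'a::idom list \<Rightarrow> nat" where
  "lin_compl s = (LEAST d. \<exists>f. f \<noteq> 0 \<and> degree f = d \<and> annihilates f s)"

end

theory Submission
  imports Defs
begin

definition YN :: "'a::idom list \<Rightarrow> 'a poly \<Rightarrow> nat \<Rightarrow> nat \<Rightarrow> 'a" where
  "YN s p N c = (\<Sum>u\<le>N. coeff p u * s ! (c + u))"

lemma YN_deg: "degree p \<le> N \<Longrightarrow> YN s p N c = YN s p (degree p) c"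
  unfolding YN_def
  by (rule sum.mono_neutral_right) (auto simp: coeff_eq_0)

lemma YN_pCons0: "YN s (pCons 0 p) (Suc N) c = YN s p N (Suc c)"
  unfolding YN_def sum.atMost_Suc_shift by simp

definition shp :: "nat \<Rightarrow> 'a::idom poly \<Rightarrow> 'a poly" where
  "shp a p = (pCons 0 ^^ a) p"

lemma shp_ne: "p \<noteq> 0 \<Longrightarrow> shp a p \<noteq> 0"
  unfolding shp_def by (induction a) auto

lemma shp_deg: "p \<noteq> 0 \<Longrightarrow> degree (shp a p) = degree p + a"
proof (induction a)
  case 0 then show ?case by (simp add: shp_def)
next
  case (Suc a)
  have "shp (Suc a) p = pCons 0 (shp a p)" by (simp add: shp_def)
  then show ?case using Suc shp_ne[OF Suc.prems, of a] by simp
qed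

lemma YN_shp: "YN s (shp a p) (N + a) c = YN s p N (c + a)"
proof (induction a arbitrary: c)
  case 0 then show ?case by (simp add: shp_def)
next
  case (Suc a)
  have "shp (Suc a) p = pCons 0 (shp a p)" by (simp add: shp_def)
  then have "YN s (shp (Suc a) p) (N + Suc a) c = YN s (shp a p) (N + a) (Suc c)"
    using YN_pCons0 by simp
  also have "\<dots> = YN s p N (Suc c + a)" by (rule Suc.IH)
  finally show ?case by simp
qed

lemma YN_diff: "YN s (smult x p - smult y q) N c = x * YN s p N c - y * YN s q N c"
  unfolding YN_def by (simp add: algebra_simps sum_subtractf sum_distrib_left)

lemma ann_take:
  assumes "i \<le> length s"
  shows "annihilates f (take i s) \<longleftrightarrow> f = 0 \<or>
    (\<forall>j. degree f + 1 \<le> j \<and> j \<le> i \<longrightarrow> YN s f (degree f) (j - degree f - 1) = 0)"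
proof -
  have "(\<Sum>k\<le>degree f. coeff f k * take i s ! (j - degree f + k - 1))
        = YN s f (degree f) (j - degree f - 1)" if "degree f + 1 \<le> j" "j \<le> i" for j
    unfolding YN_def
  proof (rule sum.cong[OF refl])
    fix k assume "k \<in> {..degree f}"
    then have "j - degree f + k - 1 < i" "j - degree f + k - 1 = j - degree f - 1 + k"
      using that by auto
    then show "coeff f k * take i s ! (j - degree f + k - 1) = coeff f k * s ! (j - degree f - 1 + k)"
      by simp
  qed
  then show ?thesis unfolding annihilates_def using assms by auto
qed


lemma ann_monom: "annihilates (monom 1 (length s)) s"
  unfolding annihilates_def by (auto simp: degree_monom_eq)

lemma lc_exists: "\<exists>f. f \<noteq> 0 \<and> degree f = lin_compl s \<and> annihilates f s"
proof -
  have "\<exists>d f. f \<noteq> 0 \<and> degree f = d \<and> annihilates f s"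
    using ann_monom[of s] by (intro exI[of _ "length s"] exI[of _ "monom 1 (length s)"])
      (simp add: degree_monom_eq)
  then show ?thesis unfolding lin_compl_def by (rule LeastI_ex)
qed

lemma lc_le: "f \<noteq> 0 \<Longrightarrow> annihilates f s \<Longrightarrow> lin_compl s \<le> degree f"
  unfolding lin_compl_def by (rule Least_le) blast

lemma lc_le_len: "lin_compl s \<le> length s"
  using lc_le[OF _ ann_monom, of s] by (simp add: degree_monom_eq)

lemma ann_takeI: "annihilates f s \<Longrightarrow> annihilates f (take k s)"
  unfolding annihilates_def by auto

lemma lc_mono: "k \<le> i \<Longrightarrow> lin_compl (take k s) \<le> lin_compl (take i s)"
proof -
  assume "k \<le> i"
  obtain f where f: "f \<noteq> 0" "degree f = lin_compl (take i s)" "annihilates f (take i s)"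
    using lc_exists by blast
  have "annihilates f (take k s)" using ann_takeI[OF f(3), of k] \<open>k \<le> i\<close> by (simp add: min_def)
  then show ?thesis using lc_le f by fastforce
qed

lemma key:
  fixes s :: "'a::idom list"
  shows "i < length s \<Longrightarrow> lin_compl (take (Suc i) s)
     \<le> max (lin_compl (take i s)) (Suc i - lin_compl (take i s))"
proof (induction i rule: less_induct)
  case (less i)
  define L where "L k = lin_compl (take k s)" for k
  have IH: "\<And>m. m < i \<Longrightarrow> L (Suc m) \<le> max (L m) (Suc m - L m)"
    using less by (simp add: L_def)
  have Lmono: "\<And>k k'. k \<le> k' \<Longrightarrow> L k \<le> L k'" unfolding L_def by (rule lc_mono)
  obtain f where f: "f \<noteq> 0" "degree f = L i" "annihilates f (take i s)"
    using lc_exists unfolding L_def by blast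
  define l where "l = L i"
  have fz: "\<And>j. l + 1 \<le> j \<Longrightarrow> j \<le> i \<Longrightarrow> YN s f l (j - l - 1) = 0"
    using f ann_take[of i s f] less.prems by (auto simp: l_def)
  show ?case
  proof (cases "annihilates f (take (Suc i) s)")
    case True
    then show ?thesis using lc_le[OF f(1) True] f(2) by (simp add: L_def)
  next
    case False
    then obtain j where j: "l + 1 \<le> j" "j \<le> Suc i" "YN s f l (j - l - 1) \<noteq> 0"
      using ann_take[of "Suc i" s f] less.prems f by (auto simp: l_def)
    have ji: "j = Suc i" using fz j by (metis le_SucE)
    define \<delta> where "\<delta> = YN s f l (i - l)"
    have \<delta>: "\<delta> \<noteq> 0" "l \<le> i" using j ji by (auto simp: \<delta>_def)
    have ex: "\<exists>m. m \<le> i \<and> L m = l" using l_def by blast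
    define m where "m = (LEAST m. m \<le> i \<and> L m = l)"
    have m: "m \<le> i" "L m = l" using LeastI_ex[OF ex] by (auto simp: m_def)
    have mmin: "\<And>k. k < m \<Longrightarrow> \<not> (k \<le> i \<and> L k = l)"
      using not_less_Least unfolding m_def by blast
    show ?thesis
    proof (cases m)
      case 0
      then have "l = 0" using m lc_le_len[of "[]::'a list"] by (simp add: L_def)
      then show ?thesis using lc_le_len[of "take (Suc i) s"] less.prems
        by (simp add: L_def[symmetric] l_def[symmetric])
    next
      case (Suc m')
      have "L m' \<noteq> l" using mmin[of m'] Suc m by auto
      moreover have "L m' \<le> l" using Lmono[of m' m] Suc m by auto
      ultimately have lt: "L m' < l" by simp
      define e where "e = L m'"
      have "l \<le> max e (Suc m' - e)" using IH[of m'] Suc m e_def by auto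
      then have le1: "l \<le> Suc m' - e" using lt e_def by auto
      obtain g where g: "g \<noteq> 0" "degree g = e" "annihilates g (take m' s)"
        using lc_exists unfolding L_def e_def by blast
      have gz: "\<And>j. e + 1 \<le> j \<Longrightarrow> j \<le> m' \<Longrightarrow> YN s g e (j - e - 1) = 0"
        using g ann_take[of m' s g] less.prems m Suc by auto
      have "\<not> annihilates g (take (Suc m') s)"
      proof
        assume "annihilates g (take (Suc m') s)"
        then have "L (Suc m') \<le> e" using lc_le[OF g(1)] g(2) by (simp add: L_def)
        then show False using Suc m lt e_def by simp
      qed
      then obtain j' where j': "e + 1 \<le> j'" "j' \<le> Suc m'" "YN s g e (j' - e - 1) \<noteq> 0"
        using ann_take[of "Suc m'" s g] less.prems g m Suc by auto
      have "j' = Suc m'" using gz j' by (metis le_SucE)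
      define \<delta>' where "\<delta>' = YN s g e (m' - e)"
      have \<delta>': "\<delta>' \<noteq> 0" "e \<le> m'" using j' \<open>j' = Suc m'\<close> by (auto simp: \<delta>'_def)
      define r where "r = i - m'"
      have r1: "r \<ge> 1" using m Suc by (simp add: r_def)
      define D where "D = max l (e + r)"
      define h where "h = smult \<delta>' (shp (D - l) f) - smult \<delta> (shp (D - r - e) g)"
      have degF: "degree (smult \<delta>' (shp (D - l) f)) = D"
        using \<delta>' shp_deg[OF f(1)] f(2) by (simp add: l_def D_def)
      have degG: "degree (smult \<delta> (shp (D - r - e) g)) < D"
        using \<delta> shp_deg[OF g(1)] g(2) r1 by (simp add: D_def)
      have degh: "degree h = D"
        unfolding h_def using degF degG
        by (metis degree_add_eq_left degree_minus diff_conv_add_uminus)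
      have hne: "h \<noteq> 0" using degh r1 D_def by auto
      have Yh: "YN s h D c = \<delta>' * YN s f l (c + (D - l)) - \<delta> * YN s g e (c + (D - r - e))" for c
      proof -
        have "YN s h D c = \<delta>' * YN s (shp (D - l) f) D c - \<delta> * YN s (shp (D - r - e) g) D c"
          unfolding h_def YN_diff ..
        moreover have "YN s (shp (D - l) f) D c = YN s f l (c + (D - l))"
          using YN_shp[of s "D - l" f l c] by (simp add: D_def)
        moreover have "YN s (shp (D - r - e) g) D c = YN s (shp (D - r - e) g) (e + (D - r - e)) c"
          using shp_deg[OF g(1)] g(2) YN_deg[of "shp (D - r - e) g" D s c] r1
          by (simp add: D_def)
        moreover have "\<dots> = YN s g e (c + (D - r - e))" by (rule YN_shp)
        ultimately show ?thesis by simp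
      qed
      have "annihilates h (take (Suc i) s)"
        unfolding ann_take[OF Suc_leI[OF less.prems]] degh
      proof (intro disjI2 allI impI)
        fix j assume jj: "D + 1 \<le> j \<and> j \<le> Suc i"
        have e1: "j - D - 1 + (D - l) = j - l - 1" using jj D_def by auto
        have e2: "j - D - 1 + (D - r - e) = (j - r) - e - 1" using jj D_def by auto
        show "YN s h D (j - D - 1) = 0"
        proof (cases "j = Suc i")
          case True
          have "j - l - 1 = i - l" "(j - r) - e - 1 = m' - e"
            using True r_def m Suc \<delta>'(2) by auto
          then show ?thesis unfolding Yh e1 e2 \<delta>_def \<delta>'_def by simp
        next
          case False
          then have "j \<le> i" using jj by simp
          then have "YN s f l (j - l - 1) = 0" using fz jj D_def by auto
          moreover have "YN s g e ((j - r) - e - 1) = 0"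
            using gz[of "j - r"] jj D_def r_def \<open>j \<le> i\<close> m Suc by auto
          ultimately show ?thesis unfolding Yh e1 e2 by simp
        qed
      qed
      then have "L (Suc i) \<le> D" using lc_le[OF hne] degh by (simp add: L_def)
      moreover have "e + r \<le> Suc i - l" using le1 r_def m Suc \<delta>'(2) by auto
      ultimately show ?thesis unfolding D_def L_def[symmetric] l_def[symmetric] by auto
    qed
  qed
qed


lemma ar: fixes l l' k :: nat
  assumes "l \<le> k" "l \<le> l'" "l' \<le> max l (Suc k - l)" "l' \<le> Suc k"
  shows "l*(k+1-l) + l' \<le> l'*(Suc k+1-l')"
proof (cases "l' = l")
  case True then show ?thesis using assms(1)
    by (simp add: algebra_simps Suc_diff_le)
next
  case False
  then have "l < l'" "l' \<le> Suc k - l" using assms by auto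
  then obtain d t where d: "l' = l + d" and t: "Suc k = l + l' + t"
    by (metis le_add_diff_inverse less_imp_le_nat add.commute le_diff_conv2 assms(1) le_SucI)
  have "k + 1 - l = l + d + t" using d t by simp
  moreover have "Suc k + 1 - l' = l + t + 1" using d t by simp
  ultimately show ?thesis using d by (simp add: algebra_simps)
qed

lemma sumbound:
  fixes s :: "'a::idom list"
  shows "k \<le> length s \<Longrightarrow> (\<Sum>i=1..k. lin_compl (take i s))
     \<le> lin_compl (take k s) * (k + 1 - lin_compl (take k s))"
proof (induction k)
  case 0 then show ?case by simp
next
  case (Suc k)
  have h1: "lin_compl (take k s) \<le> k" using lc_le_len[of "take k s"] Suc.prems by simp
  have h2: "lin_compl (take k s) \<le> lin_compl (take (Suc k) s)" by (rule lc_mono) simp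
  have h3: "lin_compl (take (Suc k) s) \<le> Suc k" using lc_le_len[of "take (Suc k) s"] Suc.prems by simp
  have "(\<Sum>i=1..Suc k. lin_compl (take i s)) = (\<Sum>i=1..k. lin_compl (take i s)) + lin_compl (take (Suc k) s)"
    by simp
  also have "\<dots> \<le> lin_compl (take k s) * (k + 1 - lin_compl (take k s)) + lin_compl (take (Suc k) s)"
    using Suc by simp
  also have "\<dots> \<le> lin_compl (take (Suc k) s) * (Suc k + 1 - lin_compl (take (Suc k) s))"
    by (rule ar[OF h1 h2 _ h3]) (use key[of k s] Suc.prems in simp)
  finally show ?case .
qed

lemma closed: "(\<Sum>i=1..(n::nat). (i + 1) div 2) = ((n+1) div 2) * ((n+2) div 2)"
proof (induction n)
  case 0 then show ?case by simp
next
  case (Suc n)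
  show ?case
  proof (cases "even n")
    case True
    then obtain q where "n = 2*q" by blast
    then show ?thesis using Suc by simp
  next
    case False
    then obtain q where "n = 2*q+1" using oddE by blast
    then show ?thesis using Suc by (simp add: algebra_simps)
  qed
qed

lemma prodbound: fixes l N :: nat assumes "l \<le> N"
  shows "l * (N - l) \<le> (N div 2) * ((N + 1) div 2)"
proof -
  obtain t where t: "N = l + t" using assms le_Suc_ex by blast
  have "int (l * t) \<le> int ((N div 2) * ((N + 1) div 2))"
  proof (cases "even N")
    case True
    then obtain q where q: "N = 2*q" by blast
    have "int t = 2 * int q - int l" using q t by simp
    then have "int l * int t - int q * int q = - ((int q - int l) * (int q - int l))"
      by algebra
    then have "int l * int t \<le> int q * int q" by (smt (verit) zero_le_square)
    then show ?thesis using q by simp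
  next
    case False
    then obtain q where q: "N = 2*q+1" using oddE by blast
    have "int l * int t \<le> int q * (int q + 1)"
    proof (cases "l \<le> q")
      case True
      have "int t = 2 * int q + 1 - int l" using q t by simp
      then have "int l * int t - int q * (int q + 1) = - ((int q - int l) * (int q + 1 - int l))"
        by algebra
      moreover have "(int q - int l) * (int q + 1 - int l) \<ge> 0" using True by simp
      ultimately show ?thesis by linarith
    next
      case False
      have "int t = 2 * int q + 1 - int l" using q t by simp
      then have "int l * int t - int q * (int q + 1) = - ((int l - int q) * (int l - int q - 1))"
        by algebra
      moreover have "(int l - int q) * (int l - int q - 1) \<ge> 0" using False by simp
      ultimately show ?thesis by linarith
    qed
    then show ?thesis using q by (simp add: algebra_simps)
  qed
  then have "l * t \<le> (N div 2) * ((N + 1) div 2)" by (simp only: of_nat_le_iff)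
  then show ?thesis using t by simp
qed

theorem mainTheorem11:
  fixes s :: "'a::idom list" and n :: nat
  assumes "n \<ge> 1" and "length s = n"
  shows "(\<Sum>i=1..n. lin_compl (take i s)) \<le> (\<Sum>i=1..n. (i + 1) div 2)"
proof -
  have "(\<Sum>i=1..n. lin_compl (take i s)) \<le> lin_compl (take n s) * (n + 1 - lin_compl (take n s))"
    using sumbound[of n s] assms by simp
  also have "\<dots> \<le> ((n+1) div 2) * ((n + 1 + 1) div 2)"
    by (rule prodbound) (use lc_le_len[of "take n s"] assms in simp)
  also have "\<dots> = (\<Sum>i=1..n. (i + 1) div 2)" using closed[of n] by simp
  finally show ?thesis .
qed

end
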